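(* Let $(m_j)_{j=1}^{\infty}$ be a strictly increasing sequence of positive integers with $m_{j+1}\ge q\,m_j$ for all $j$, where $q\ge 2$. Let $A_j>0$, $B_j\in\mathbb{C}$ with $A_j^2-|B_j|^2=1$, and let $M,N\in\mathbb{N}_0$ with $M<N$. Expand each entry of the matrix product $$\prod_{j=M+1}^{N}\begin{bmatrix} A_j & B_j e^{2\pi i m_j t}\\ \overline{B_j}e^{-2\pi i m_j t} & A_j\end{bmatrix}$$ (factors in increasing order of $j$ from left to right) formally as a sum of products, one factor taken from each matrix, so that each term is a constant times $e^{2\pi i n t}$ for some integer frequency $n$. Then, within each entry, the frequencies of distinct terms of this expansion are mutually separated by at least $m_{M+1}$; i.e. any two distinct terms have frequencies $n\ne n'$ with $|n-n'|\ge m_{M+1}$.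
   Context: The frequency of a term is the integer $n$ for which the term is a constant multiple of $e^{2\pi i n t}$; e.g. $B_{M+1}e^{2\pi i m_{M+1}t}\cdot A_{M+2}$ has frequency $m_{M+1}$. *)

theory Defs
  imports "HOL-Analysis.Analysis"
begin

definition mat_entry :: "(nat \<Rightarrow> real) \<Rightarrow> (nat \<Rightarrow> complex) \<Rightarrow> (nat \<Rightarrow> nat)
    \<Rightarrow> nat \<Rightarrow> nat \<Rightarrow> nat \<Rightarrow> real \<Rightarrow> complex" where
  "mat_entry A B m j a b t =
     (if a = 0 \<and> b = 0 then complex_of_real (A j)
      else if a = 0 \<and> b = 1 then B j * exp (2 * pi * \<i> * of_nat (m j) * t)
      else if a = 1 \<and> b = 0 then cnj (B j) * exp (- 2 * pi * \<i> * of_nat (m j) * t)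
      else complex_of_real (A j))"

definition entry_freq :: "(nat \<Rightarrow> nat) \<Rightarrow> nat \<Rightarrow> nat \<Rightarrow> nat \<Rightarrow> int" where
  "entry_freq m j a b =
     (if a = 0 \<and> b = 1 then int (m j) else if a = 1 \<and> b = 0 then - int (m j) else 0)"

text \<open>A term of the formal expansion of entry (r,c) of the product of factors
  M+1,...,N is determined by an index path s with s M = r, s N = c and
  s j \<in> {0,1}; factor j contributes its entry (s (j-1), s j).\<close>
definition valid_path :: "nat \<Rightarrow> nat \<Rightarrow> nat \<Rightarrow> nat \<Rightarrow> (nat \<Rightarrow> nat) \<Rightarrow> bool" where
  "valid_path M N r c s \<longleftrightarrow> s M = r \<and> s N = c \<and> (\<forall>j\<in>{M..N}. s j \<in> {0, 1})"

definition path_term :: "(nat \<Rightarrow> real) \<Rightarrow> (nat \<Rightarrow> complex) \<Rightarrow> (nat \<Rightarrow> nat)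
    \<Rightarrow> nat \<Rightarrow> nat \<Rightarrow> (nat \<Rightarrow> nat) \<Rightarrow> real \<Rightarrow> complex" where
  "path_term A B m M N s t = (\<Prod>j\<in>{M+1..N}. mat_entry A B m j (s (j - 1)) (s j) t)"

definition path_freq :: "(nat \<Rightarrow> nat) \<Rightarrow> nat \<Rightarrow> nat \<Rightarrow> (nat \<Rightarrow> nat) \<Rightarrow> int" where
  "path_freq m M N s = (\<Sum>j\<in>{M+1..N}. entry_freq m j (s (j - 1)) (s j))"

end

theory Submission
  imports Defs
begin

lemma entry_exp:
  assumes "a \<in> {0,1}" "b \<in> {0,1}"
  shows "mat_entry A B m j a b t =
    (if a = b then complex_of_real (A j) else if a = 0 then B j else cnj (B j))
      * exp (2 * pi * \<i> * of_int (entry_freq m j a b) * t)"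
  using assms by (auto simp: mat_entry_def entry_freq_def)

lemma entry_freq_alt:
  assumes "a \<in> {0,1}" "b \<in> {0,1}"
  shows "entry_freq m j a b = int (m j) * (int b - int a)"
  using assms by (auto simp: entry_freq_def)

lemma sum_parts:
  fixes e :: "nat \<Rightarrow> int" and m :: "nat \<Rightarrow> nat"
  assumes "e M = 0"
  shows "(\<Sum>j\<in>{M+1..M+k}. int (m j) * (e j - e (j - 1))) =
     int (m (M+k)) * e (M+k) - (\<Sum>j\<in>{M+1..<M+k}. (int (m (Suc j)) - int (m j)) * e j)"
proof (induction k)
  case 0
  then show ?case using assms by simp
next
  case (Suc k)
  have s1: "{M+1..M+Suc k} = insert (M + Suc k) {M+1..M+k}" by auto
  have "(\<Sum>j\<in>{M+1..M+Suc k}. int (m j) * (e j - e (j - 1))) =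
      int (m (M+Suc k)) * (e (M+Suc k) - e (M+k)) + (\<Sum>j\<in>{M+1..M+k}. int (m j) * (e j - e (j - 1)))"
    unfolding s1 by (subst sum.insert) auto
  moreover have "(\<Sum>j\<in>{M+1..<M+Suc k}. (int (m (Suc j)) - int (m j)) * e j) =
      (\<Sum>j\<in>{M+1..<M+k}. (int (m (Suc j)) - int (m j)) * e j) + (int (m (M + Suc k)) - int (m (M+k))) * e (M+k)"
  proof (cases k)
    case 0
    then show ?thesis using assms by simp
  next
    case (Suc k')
    then have "{M+1..<M+Suc k} = insert (M+k) {M+1..<M+k}" by auto
    then show ?thesis by simp
  qed
  ultimately show ?case using Suc.IH by (simp add: algebra_simps)
qed

lemma lac_sum:
  fixes e :: "nat \<Rightarrow> int" and m :: "nat \<Rightarrow> nat"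
  assumes d: "\<And>j. j \<ge> M+1 \<Longrightarrow> int (m (Suc j)) - int (m j) \<ge> int (m j)"
    and e: "\<And>j. \<bar>e j\<bar> \<le> 1"
  shows "\<bar>\<Sum>j\<in>{M+1..<M+1+k}. (int (m (Suc j)) - int (m j)) * e j\<bar> \<le> int (m (M+1+k)) - int (m (M+1))
    \<and> ((\<exists>j\<in>{M+1..<M+1+k}. e j \<noteq> 0) \<longrightarrow>
        \<bar>\<Sum>j\<in>{M+1..<M+1+k}. (int (m (Suc j)) - int (m j)) * e j\<bar> \<ge> int (m (M+1)))"
proof (induction k)
  case 0
  then show ?case by simp
next
  case (Suc k)
  define n where "n = M+1+k"
  define S where "S = (\<Sum>j\<in>{M+1..<n}. (int (m (Suc j)) - int (m j)) * e j)"
  have IH1: "\<bar>S\<bar> \<le> int (m n) - int (m (M+1))" and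
       IH2: "(\<exists>j\<in>{M+1..<n}. e j \<noteq> 0) \<longrightarrow> \<bar>S\<bar> \<ge> int (m (M+1))"
    using Suc.IH unfolding S_def n_def by auto
  have dn: "int (m (Suc n)) - int (m n) \<ge> int (m n)" using d n_def by auto
  have eq: "(\<Sum>j\<in>{M+1..<M+1+Suc k}. (int (m (Suc j)) - int (m j)) * e j) =
        S + (int (m (Suc n)) - int (m n)) * e n"
    unfolding S_def n_def by simp
  have en: "e n \<in> {-1,0,1}" using e[of n] by auto
  have ex: "(\<exists>j\<in>{M+1..<M+1+Suc k}. e j \<noteq> 0) \<longleftrightarrow> (\<exists>j\<in>{M+1..<n}. e j \<noteq> 0) \<or> e n \<noteq> 0"
    unfolding n_def by (auto simp: less_Suc_eq)
  show ?case unfolding eq ex using IH1 IH2 dn en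
    by (auto simp: n_def abs_if split: if_splits)
qed

theorem lemma2p1:
  fixes m :: "nat \<Rightarrow> nat" and q :: real and A :: "nat \<Rightarrow> real" and B :: "nat \<Rightarrow> complex"
    and M N :: nat
  assumes m_pos: "\<forall>j\<ge>1. m j > 0"
    and m_strict: "\<forall>j\<ge>1. m j < m (Suc j)"
    and m_lac: "\<forall>j\<ge>1. real (m (Suc j)) \<ge> q * real (m j)"
    and q: "q \<ge> 2"
    and A_pos: "\<forall>j\<ge>1. A j > 0"
    and AB: "\<forall>j\<ge>1. (A j)\<^sup>2 - (cmod (B j))\<^sup>2 = 1"
    and MN: "M < N"
  shows "\<forall>r\<in>{0,1}. \<forall>c\<in>{0,1}. \<forall>s s'.
           valid_path M N r c s \<longrightarrow> valid_path M N r c s' \<longrightarrow>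
           (\<exists>k. \<forall>t. path_term A B m M N s t = k * exp (2 * pi * \<i> * of_int (path_freq m M N s) * t)) \<and>
           ((\<exists>j\<in>{M..N}. s j \<noteq> s' j) \<longrightarrow>
              path_freq m M N s \<noteq> path_freq m M N s' \<and>
              \<bar>path_freq m M N s - path_freq m M N s'\<bar> \<ge> int (m (M + 1)))"
proof (intro ballI allI impI conjI)
  fix r c s s'
  assume r: "r \<in> {0::nat,1}" and c: "c \<in> {0::nat,1}"
    and vs: "valid_path M N r c s" and vs': "valid_path M N r c s'"
  have sj: "\<And>j. j \<in> {M+1..N} \<Longrightarrow> s (j-1) \<in> {0,1} \<and> s j \<in> {0,1}"
  proof -
    fix j assume "j \<in> {M+1..N}"
    then have "j-1 \<in> {M..N}" "j \<in> {M..N}" by auto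
    then show "s (j-1) \<in> {0,1} \<and> s j \<in> {0,1}" using vs unfolding valid_path_def by blast
  qed
  have sj': "\<And>j. j \<in> {M+1..N} \<Longrightarrow> s' (j-1) \<in> {0,1} \<and> s' j \<in> {0,1}"
  proof -
    fix j assume "j \<in> {M+1..N}"
    then have "j-1 \<in> {M..N}" "j \<in> {M..N}" by auto
    then show "s' (j-1) \<in> {0,1} \<and> s' j \<in> {0,1}" using vs' unfolding valid_path_def by blast
  qed
  define coef where "coef j = (if s (j-1) = s j then complex_of_real (A j)
      else if s (j-1) = 0 then B j else cnj (B j))" for j
  show "\<exists>k. \<forall>t. path_term A B m M N s t = k * exp (2 * pi * \<i> * of_int (path_freq m M N s) * t)"
  proof (intro exI allI)
    fix t
    have "path_term A B m M N s t = (\<Prod>j\<in>{M+1..N}. coef j * exp (2 * pi * \<i> * of_int (entry_freq m j (s (j-1)) (s j)) * t))"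
      unfolding path_term_def coef_def using sj by (intro prod.cong refl entry_exp) auto
    also have "\<dots> = (\<Prod>j\<in>{M+1..N}. coef j) * exp (\<Sum>j\<in>{M+1..N}. 2 * pi * \<i> * of_int (entry_freq m j (s (j-1)) (s j)) * t)"
      by (simp add: prod.distrib exp_sum)
    also have "(\<Sum>j\<in>{M+1..N}. 2 * pi * \<i> * of_int (entry_freq m j (s (j-1)) (s j)) * t)
        = 2 * pi * \<i> * of_int (path_freq m M N s) * t"
      unfolding path_freq_def of_int_sum sum_distrib_left sum_distrib_right by (simp add: mult.assoc)
    finally show "path_term A B m M N s t = (\<Prod>j\<in>{M+1..N}. coef j) * exp (2 * pi * \<i> * of_int (path_freq m M N s) * t)" .
  qed
  assume ex: "\<exists>j\<in>{M..N}. s j \<noteq> s' j"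
  define e where "e j = (if j \<in> {M..N} then int (s j) - int (s' j) else 0)" for j
  have eM: "e M = 0" and eN: "e N = 0" using vs vs' unfolding valid_path_def e_def by auto
  have pf: "path_freq m M N s - path_freq m M N s' = (\<Sum>j\<in>{M+1..N}. int (m j) * (e j - e (j - 1)))"
    unfolding path_freq_def sum_subtractf[symmetric]
  proof (intro sum.cong refl)
    fix j assume j: "j \<in> {M+1..N}"
    then have E: "e j = int (s j) - int (s' j)" "e (j-1) = int (s (j-1)) - int (s' (j-1))"
      unfolding e_def by auto
    have "entry_freq m j (s (j-1)) (s j) - entry_freq m j (s' (j-1)) (s' j) =
        int (m j) * ((int (s j) - int (s' j)) - (int (s (j-1)) - int (s' (j-1))))"
      using sj[OF j] sj'[OF j] by (simp add: entry_freq_alt algebra_simps)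
    then show "entry_freq m j (s (j-1)) (s j) - entry_freq m j (s' (j-1)) (s' j) = int (m j) * (e j - e (j-1))"
      unfolding E .
  qed
  obtain k where k: "N = M + 1 + k" using MN by (metis add_Suc_right less_iff_Suc_add plus_1_eq_Suc add.commute)
  have pf2: "path_freq m M N s - path_freq m M N s' = - (\<Sum>j\<in>{M+1..<M+1+k}. (int (m (Suc j)) - int (m j)) * e j)"
    using pf sum_parts[of e M m "k+1", OF eM] eN k by (simp add: add.assoc)
  have d: "\<And>j. j \<ge> M+1 \<Longrightarrow> int (m (Suc j)) - int (m j) \<ge> int (m j)"
  proof -
    fix j assume "j \<ge> M+1"
    then have "real (m (Suc j)) \<ge> q * real (m j)" "m j > 0" using m_lac m_pos by auto
    moreover have "q * real (m j) \<ge> 2 * real (m j)" by (rule mult_right_mono[OF q]) simp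
    ultimately have "real (m (Suc j)) \<ge> 2 * real (m j)" by linarith
    then show "int (m (Suc j)) - int (m j) \<ge> int (m j)" by linarith
  qed
  have ee: "\<And>j. \<bar>e j\<bar> \<le> 1"
  proof -
    fix j show "\<bar>e j\<bar> \<le> 1"
    proof (cases "j \<in> {M..N}")
      case True
      then have "s j \<in> {0,1}" "s' j \<in> {0,1}" using vs vs' unfolding valid_path_def by blast+
      then show ?thesis using True unfolding e_def by auto
    next
      case False
      then show ?thesis unfolding e_def by (simp only: if_not_P[OF False]) simp
    qed
  qed
  obtain j where j: "j \<in> {M..N}" "s j \<noteq> s' j" using ex by blast
  have "j \<noteq> M" "j \<noteq> N" using j vs vs' unfolding valid_path_def by auto
  then have "j \<in> {M+1..<M+1+k}" "e j \<noteq> 0" using j k unfolding e_def by auto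
  then show "\<bar>path_freq m M N s - path_freq m M N s'\<bar> \<ge> int (m (M + 1))"
    using lac_sum[of M m e k, OF d ee] pf2 by auto
  moreover have "m (M+1) > 0" using m_pos by simp
  ultimately show "path_freq m M N s \<noteq> path_freq m M N s'" by auto
qed

end
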